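(* Let $k\ge 2$ and $n\ge 1$ be integers and let $1\le M\le kn-1$. Then the probability of selecting an item of highest rank (rank $n$) using the strategy $\mathcal{S}(n,k;M)$ is \[ P_{n,k}(\mathcal{S}(n,k;M))=\sum_{l=1}^{k-1}\frac{\binom Ml(k)_l\,(k(n-1))_{M-l}}{(kn)_M} +k\sum_{j=1}^{n-1}\sum_{l=1}^k \frac{\binom Ml(k)_l\,(k(j-1))_{M-l}}{(kn)_M}\cdot\frac 1{k(n-j+1)-l}. \]
   Context: Fix integers $k\ge2$, $n\ge1$. There are $kn$ items, $k$ items at each of the ranks $1,2,\dots,n$ (rank $n$ is highest). The items are revealed one at a time in a uniformly random order, i.e. the sequence of ranks is a uniformly random permutation of the multiset $\{1^k,2^k,\dots,n^k\}$ (each number in $\{1,\dots,n\}$ repeated $k$ times); $P_{n,k}$ denotes this uniform probability. For $M\in\{1,\dots,kn-1\}$, the strategy $\mathcal{S}(n,k;M)$ lets the first $M$ items pass and then selects the first later-arriving item whose rank is greater than or equal to the highest rank among the first $M$ items (if such an item exists; otherwise nothing is selected). $P_{n,k}(\mathcal{S}(n,k;M))$ denotes the probability that this strategy selects an item of rank $n$. Notation: $(b)_a=b(b-1)\cdots(b-a+1)$ is the falling factorial for nonnegative integers $a,b$, with $(b)_0=1$ (so $(b)_a=0$ if $a>b$). *)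

theory Defs
  imports Complex_Main "HOL-Combinatorics.Multiset_Permutations"
begin

definition rank_mset :: "nat \<Rightarrow> nat \<Rightarrow> nat multiset" where
  "rank_mset n k = (\<Sum>r\<in>{1..n}. replicate_mset k r)"

definition arrangements :: "nat \<Rightarrow> nat \<Rightarrow> nat list set" where
  "arrangements n k = permutations_of_multiset (rank_mset n k)"

definition strategy_succeeds :: "nat \<Rightarrow> nat \<Rightarrow> nat list \<Rightarrow> bool" where
  "strategy_succeeds n M xs =
     (case find (\<lambda>x. Max (set (take M xs)) \<le> x) (drop M xs) of
        None \<Rightarrow> False
      | Some x \<Rightarrow> x = n)"

definition success_prob :: "nat \<Rightarrow> nat \<Rightarrow> nat \<Rightarrow> real" where
  "success_prob n k M =
     real (card {xs \<in> arrangements n k. strategy_succeeds n M xs}) / real (card (arrangements n k))"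

text \<open>Falling factorial (b)_a = b(b-1)...(b-a+1); equals 0 if a > b.\<close>
definition ffall :: "nat \<Rightarrow> nat \<Rightarrow> nat" where
  "ffall b a = (\<Prod>i<a. b - i)"

end

theory Submission
  imports Defs
begin

definition pr :: "nat multiset \<Rightarrow> (nat list \<Rightarrow> bool) \<Rightarrow> real" where
  "pr A P = real (card {xs\<in>permutations_of_multiset A. P xs}) / real (card (permutations_of_multiset A))"

lemma size_filter_sum:
  "size (filter_mset P A) = (\<Sum>x\<in>set_mset A. if P x then count A x else 0)"
proof -
  have "size (filter_mset P A) = sum (count (filter_mset P A)) (set_mset (filter_mset P A))"
    by (rule size_multiset_overloaded_eq)
  also have "set_mset (filter_mset P A) = {x\<in>set_mset A. P x}" by auto
  also have "sum (count (filter_mset P A)) {x\<in>set_mset A. P x} = sum (count A) {x\<in>set_mset A. P x}"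
    by (rule sum.cong) auto
  also have "\<dots> = (\<Sum>x\<in>set_mset A. if P x then count A x else 0)"
    by (rule sum.inter_filter) simp
  finally show ?thesis .
qed

lemma size_filter_sum_real:
  "real (size (filter_mset P A)) = (\<Sum>x\<in>set_mset A. if P x then real (count A x) else 0)"
  unfolding size_filter_sum of_nat_sum by (rule sum.cong) auto

lemma pr_const: "pr A (\<lambda>_. c) = (if c then 1 else 0)"
proof -
  have "card (permutations_of_multiset A) > 0"
    by (simp add: card_gt_0_iff)
  then show ?thesis by (cases c) (simp_all add: pr_def)
qed

lemma card_perm_pos: "card (permutations_of_multiset A) > 0"
  by (simp add: card_gt_0_iff)

lemma pr_rec:
  assumes "A \<noteq> {#}"
  shows "pr A P = (\<Sum>x\<in>set_mset A. real (count A x) / real (size A) * pr (A - {#x#}) (\<lambda>ys. P (x#ys)))"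
proof -
  have eq: "{xs\<in>permutations_of_multiset A. P xs} =
     (\<Union>x\<in>set_mset A. (#) x ` {ys\<in>permutations_of_multiset (A - {#x#}). P (x#ys)})"
  proof -
    have "{xs\<in>permutations_of_multiset A. P xs} = {xs \<in> (\<Union>x\<in>set_mset A. (#) x ` permutations_of_multiset (A - {#x#})). P xs}"
      by (subst permutations_of_multiset_nonempty[OF assms]) (rule refl)
    also have "\<dots> = (\<Union>x\<in>set_mset A. (#) x ` {ys\<in>permutations_of_multiset (A - {#x#}). P (x#ys)})"
      by auto
    finally show ?thesis .
  qed
  have "card {xs\<in>permutations_of_multiset A. P xs} =
     (\<Sum>x\<in>set_mset A. card ((#) x ` {ys\<in>permutations_of_multiset (A - {#x#}). P (x#ys)}))"
    unfolding eq
  proof (rule card_UN_disjoint)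
    show "\<forall>i\<in>set_mset A. \<forall>j\<in>set_mset A. i \<noteq> j \<longrightarrow>
      (#) i ` {ys \<in> permutations_of_multiset (A - {#i#}). P (i # ys)} \<inter>
      (#) j ` {ys \<in> permutations_of_multiset (A - {#j#}). P (j # ys)} = {}" by blast
  qed simp_all
  also have "\<dots> = (\<Sum>x\<in>set_mset A. card {ys\<in>permutations_of_multiset (A - {#x#}). P (x#ys)})"
    by (rule sum.cong) (auto intro: card_image)
  finally have c: "card {xs\<in>permutations_of_multiset A. P xs} = \<dots>" .
  have "pr A P = (\<Sum>x\<in>set_mset A. real (card {ys\<in>permutations_of_multiset (A - {#x#}). P (x#ys)}) / real (card (permutations_of_multiset A)))"
    unfolding pr_def c of_nat_sum sum_divide_distrib ..
  also have "\<dots> = (\<Sum>x\<in>set_mset A. real (count A x) / real (size A) * pr (A - {#x#}) (\<lambda>ys. P (x#ys)))"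
  proof (rule sum.cong)
    fix x assume x: "x \<in> set_mset A"
    have r: "real (card (permutations_of_multiset A)) * real (count A x) = real (size A) * real (card (permutations_of_multiset (A - {#x#})))"
      using card_permutations_of_multiset_remove_aux[OF x] by (metis of_nat_mult)
    have p1: "real (card (permutations_of_multiset A)) > 0" "real (card (permutations_of_multiset (A - {#x#}))) > 0"
      using card_perm_pos by auto
    have "real (size A) > 0" using assms by (simp add: nonempty_has_size)
    show "real (card {ys\<in>permutations_of_multiset (A - {#x#}). P (x#ys)}) / real (card (permutations_of_multiset A)) =
       real (count A x) / real (size A) * pr (A - {#x#}) (\<lambda>ys. P (x#ys))"
    proof -
      have key: "K / C = c / S * (K / D)" if "C > 0" "D > 0" "S > 0" "C * c = S * D" for K C D c S :: real
      proof -
        have "c / S * (K / D) = (C * c) * K / (C * S * D)" using that by (simp add: field_simps)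
        also have "\<dots> = K / C" using that by (simp add: field_simps)
        finally show ?thesis by simp
      qed
      show ?thesis unfolding pr_def by (rule key) (use p1 r \<open>real (size A) > 0\<close> in auto)
    qed
  qed simp
  finally show ?thesis .
qed

lemma ffall_Suc: "ffall b (Suc m) = b * ffall (b-1) m"
  unfolding ffall_def prod.lessThan_Suc_shift by simp

lemma ffall_0[simp]: "ffall b 0 = 1" by (simp add: ffall_def)

definition hg :: "nat \<Rightarrow> nat \<Rightarrow> nat \<Rightarrow> nat \<Rightarrow> nat \<Rightarrow> real" where
  "hg a b N M l = real (M choose l) * real (ffall a l) * real (ffall b (M-l)) / real (ffall N M)"

lemma hg_rec:
  assumes "N \<ge> 1"
  shows "hg a b N (Suc M) l = real b / real N * hg a (b-1) (N-1) M l
     + real a / real N * (if l \<ge> 1 then hg (a-1) b (N-1) M (l-1) else 0)"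
proof -
  define D where "D = real (ffall (N-1) M)"
  have fN: "real (ffall N (Suc M)) = real N * D" unfolding D_def ffall_Suc by simp
  have Npos: "real N > 0" using assms by simp
  show ?thesis
  proof (cases "D = 0")
    case True
    then show ?thesis unfolding hg_def fN D_def by simp
  next
    case Dnz: False
    show ?thesis
    proof (cases l)
      case 0
      then show ?thesis unfolding hg_def fN D_def[symmetric]
        using Npos Dnz by (simp add: ffall_Suc field_simps)
    next
      case (Suc l')
      have fa: "ffall a l = a * ffall (a-1) l'" using Suc ffall_Suc by simp
      show ?thesis
      proof (cases "l' \<le> M")
        case True
        have ch: "Suc M choose l = (M choose l) + (M choose l')" using Suc by simp
        have e: "M - l' = Suc (M - l)" if "l' < M" using Suc that by simp
        show ?thesis
        proof (cases "l' = M")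
          case True
          then show ?thesis unfolding hg_def fN D_def[symmetric] using Suc Npos Dnz
            by (simp add: ffall_Suc field_simps)
        next
          case False
          then have lt: "l' < M" using \<open>l' \<le> M\<close> by simp
          have fb: "ffall b (M - l') = b * ffall (b-1) (M - Suc l')"
            using lt ffall_Suc by (metis Suc_diff_Suc)
          have fb2: "ffall b (M - l') = ffall b (Suc M - l)" using Suc by simp
          show ?thesis unfolding hg_def fN D_def[symmetric] ch fa fb2
            using Suc Npos Dnz
            by (simp add: fb field_simps)
        qed
      next
        case False
        then show ?thesis unfolding hg_def using Suc by (simp add: binomial_eq_0)
      qed
    qed
  qed
qed

lemma size_partition: "size (filter_mset P A) + size (filter_mset (\<lambda>x. \<not> P x) A) = size A"
  by (metis multiset_partition size_union)

lemma filter_remove_notP: "\<not> P x \<Longrightarrow> filter_mset P (A - {#x#}) = filter_mset P A"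
  by (rule multiset_eqI) auto

lemma count_le_filter: "P y \<Longrightarrow> count A y \<le> size (filter_mset P A)"
proof -
  assume "P y"
  have "filter_mset (\<lambda>x. x = y) A \<subseteq># filter_mset P A"
    using \<open>P y\<close> by (simp add: subseteq_mset_def)
  then have "size (filter_mset (\<lambda>x. x = y) A) \<le> size (filter_mset P A)" by (rule size_mset_mono)
  then show ?thesis by (simp add: count_conv_size_mset)
qed

lemma suffix_pr:
  assumes "j \<le> n"
  shows "pr A (\<lambda>xs. find (\<lambda>x. j \<le> x) xs = Some n)
       = real (count A n) / real (size (filter_mset (\<lambda>x. j \<le> x) A))"
proof (induction A rule: multiset_remove_induct)
  case empty
  then show ?case by (simp add: pr_def)
next
  case (remove A)
  define d where "d = real (count A n)"
  define s where "s = real (size (filter_mset (\<lambda>x. j \<le> x) A))"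
  define b where "b = real (size (filter_mset (\<lambda>x. \<not> j \<le> x) A))"
  define N where "N = real (size A)"
  have bsN: "s + b = N" unfolding s_def b_def N_def using size_partition[of "\<lambda>x. j \<le> x" A]
    by (metis of_nat_add)
  have Npos: "N > 0" unfolding N_def using remove(1) by (simp add: nonempty_has_size)
  have ds: "d \<le> s" unfolding d_def s_def using count_le_filter[of "\<lambda>x. j \<le> x" n A] assms by simp
  have "pr A (\<lambda>xs. find (\<lambda>x. j \<le> x) xs = Some n) =
     (\<Sum>x\<in>set_mset A. real (count A x) / real (size A) *
        pr (A - {#x#}) (\<lambda>ys. find (\<lambda>x. j \<le> x) (x#ys) = Some n))"
    by (rule pr_rec[OF remove(1)])
  also have "\<dots> = (\<Sum>x\<in>set_mset A. (if \<not> j \<le> x then real (count A x) else 0) * (d / (N * s))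
       + (if x = n then d / N else 0))"
  proof (rule sum.cong)
    fix x assume x: "x \<in> set_mset A"
    show "real (count A x) / real (size A) *
        pr (A - {#x#}) (\<lambda>ys. find (\<lambda>x. j \<le> x) (x#ys) = Some n) =
      (if \<not> j \<le> x then real (count A x) else 0) * (d / (N * s)) + (if x = n then d / N else 0)"
    proof (cases "j \<le> x")
      case True
      then have "pr (A - {#x#}) (\<lambda>ys. find (\<lambda>x. j \<le> x) (x#ys) = Some n) = (if x = n then 1 else 0)"
        using pr_const[of "A - {#x#}" "x = n"] by simp
      then show ?thesis using True unfolding d_def N_def by auto
    next
      case False
      then have "x \<noteq> n" using assms by auto
      have "pr (A - {#x#}) (\<lambda>ys. find (\<lambda>x. j \<le> x) (x#ys) = Some n)
          = pr (A - {#x#}) (\<lambda>ys. find (\<lambda>x. j \<le> x) ys = Some n)" using False by simp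
      also have "\<dots> = d / s" using remove(2)[OF x] False \<open>x \<noteq> n\<close>
        unfolding d_def s_def by (simp add: filter_remove_notP)
      finally show ?thesis using False \<open>x \<noteq> n\<close> Npos unfolding N_def by (simp add: field_simps)
    qed
  qed simp
  also have "\<dots> = b * (d / (N * s)) + (if n \<in># A then d / N else 0)"
    unfolding sum.distrib sum_distrib_right[symmetric] b_def size_filter_sum_real
    by (simp add: sum.delta)
  also have "\<dots> = d / s"
  proof (cases "s = 0")
    case True
    then have "d = 0" using ds d_def by simp
    then show ?thesis using True by simp
  next
    case False
    have e: "(if n \<in># A then d / N else 0) = d / N" unfolding d_def by (simp add: not_in_iff)
    have "b * (d / (N * s)) + d / N = d * (b + s) / (N * s)" using False Npos by (simp add: field_simps)
    also have "\<dots> = d / s" using bsN False Npos by (simp add: add.commute)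
    finally show ?thesis unfolding e .
  qed
  finally show ?case unfolding d_def s_def .
qed

definition E :: "nat \<Rightarrow> nat \<Rightarrow> nat \<Rightarrow> nat \<Rightarrow> nat list \<Rightarrow> bool" where
  "E n j M l xs \<longleftrightarrow> count (mset (take M xs)) j = l \<and> (\<forall>x\<in>set (take M xs). x \<le> j)
     \<and> find (\<lambda>x. j \<le> x) (drop M xs) = Some n"

definition R :: "nat \<Rightarrow> nat \<Rightarrow> nat multiset \<Rightarrow> nat \<Rightarrow> real" where
  "R n j A l = (if j = n then real (count A j) - real l else real (count A n))
      / (real (count A j) + real (size (filter_mset (\<lambda>x. j < x) A)) - real l)"

lemma E_Cons: "E n j (Suc M) l (x#ys) = (if x < j then E n j M l ys else if x = j then 1 \<le> l \<and> E n j M (l-1) ys else False)"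
  unfolding E_def by auto

lemma E_0: "E n j 0 l xs = (l = 0 \<and> find (\<lambda>x. j \<le> x) xs = Some n)"
  unfolding E_def by auto

lemma filter_remove_P: "P x \<Longrightarrow> x \<in># A \<Longrightarrow> filter_mset P (A - {#x#}) = filter_mset P A - {#x#}"
  by (rule multiset_eqI) auto

lemma size_ge_split: "size (filter_mset (\<lambda>x. (j::nat) \<le> x) A) = count A j + size (filter_mset (\<lambda>x. j < x) A)"
proof -
  have "filter_mset (\<lambda>x. j \<le> x) A = filter_mset (\<lambda>x. x = j) A + filter_mset (\<lambda>x. j < x) A"
    by (rule multiset_eqI) auto
  then show ?thesis by (simp add: count_conv_size_mset)
qed

lemma main_pr:
  assumes "j \<le> n"
  shows "pr A (E n j M l) = hg (count A j) (size (filter_mset (\<lambda>x. x < j) A)) (size A) M l * R n j A l"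
proof (induction M arbitrary: A l)
  case 0
  show ?case
  proof (cases "l = 0")
    case True
    have "pr A (E n j 0 l) = pr A (\<lambda>xs. find (\<lambda>x. j \<le> x) xs = Some n)"
      unfolding E_0 using True by simp
    also have "\<dots> = real (count A n) / real (size (filter_mset (\<lambda>x. j \<le> x) A))"
      by (rule suffix_pr[OF assms])
    finally show ?thesis using True unfolding hg_def R_def size_ge_split by simp
  next
    case False
    then have "pr A (E n j 0 l) = pr A (\<lambda>_. False)" unfolding E_0 by simp
    then show ?thesis using False pr_const[of A False] unfolding hg_def by simp
  qed
next
  case (Suc M)
  show ?case
  proof (cases "A = {#}")
    case True
    have "pr A (E n j (Suc M) l) = 0" unfolding True pr_def by (simp add: E_def)
    then show ?thesis using True unfolding hg_def by (simp add: ffall_Suc)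
  next
    case Ane: False
    define a where "a = count A j"
    define b where "b = size (filter_mset (\<lambda>x. x < j) A)"
    define N where "N = size A"
    define r where "r = R n j A l"
    define h0 where "h0 = hg a (b-1) (N-1) M l"
    define h1 where "h1 = (if 1 \<le> l then hg (a-1) b (N-1) M (l-1) else 0)"
    have N1: "N \<ge> 1" unfolding N_def using Ane by (simp add: Suc_leI nonempty_has_size)
    have "pr A (E n j (Suc M) l) = (\<Sum>x\<in>set_mset A. real (count A x) / real (size A) * pr (A - {#x#}) (\<lambda>ys. E n j (Suc M) l (x#ys)))"
      by (rule pr_rec[OF Ane])
    also have "\<dots> = (\<Sum>x\<in>set_mset A. (if x < j then real (count A x) else 0) * (h0 * r / real N)
        + (if x = j then real a / real N * h1 * r else 0))"
    proof (rule sum.cong)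
      fix x assume x: "x \<in> set_mset A"
      show "real (count A x) / real (size A) * pr (A - {#x#}) (\<lambda>ys. E n j (Suc M) l (x#ys)) =
        (if x < j then real (count A x) else 0) * (h0 * r / real N) + (if x = j then real a / real N * h1 * r else 0)"
      proof (cases "x < j")
        case True
        have "pr (A - {#x#}) (\<lambda>ys. E n j (Suc M) l (x#ys)) = pr (A - {#x#}) (E n j M l)"
          using True by (simp add: E_Cons)
        also have "\<dots> = h0 * r"
        proof -
          have "count (A - {#x#}) j = a" using True unfolding a_def by simp
          moreover have "size (filter_mset (\<lambda>x. x < j) (A - {#x#})) = b - 1"
          proof -
            have "x \<in># filter_mset (\<lambda>x. x < j) A" using True x by simp
            then show ?thesis unfolding b_def using True x by (simp add: filter_remove_P size_Diff_singleton)
          qed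
          moreover have "size (A - {#x#}) = N - 1" unfolding N_def using x by (simp add: size_Diff_singleton)
          moreover have "R n j (A - {#x#}) l = r" unfolding r_def R_def
            using True assms by (simp add: filter_remove_notP)
          ultimately show ?thesis using Suc[of "A - {#x#}" l] unfolding h0_def by simp
        qed
        finally show ?thesis using True unfolding N_def by simp
      next
        case False
        show ?thesis
        proof (cases "x = j")
          case True
          have cj: "count A j \<ge> 1" using x True by simp
          show ?thesis
          proof (cases "1 \<le> l")
            case True
            have "pr (A - {#x#}) (\<lambda>ys. E n j (Suc M) l (x#ys)) = pr (A - {#x#}) (E n j M (l-1))"
              using True \<open>x = j\<close> by (simp add: E_Cons)
            also have "\<dots> = h1 * r"
            proof -
              have "count (A - {#x#}) j = a - 1" using \<open>x = j\<close> unfolding a_def by simp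
              moreover have "size (filter_mset (\<lambda>x. x < j) (A - {#x#})) = b"
                unfolding b_def using \<open>x = j\<close> by (simp add: filter_remove_notP)
              moreover have "size (A - {#x#}) = N - 1" unfolding N_def using x by (simp add: size_Diff_singleton)
              moreover have "R n j (A - {#x#}) (l-1) = r"
              proof -
                have cr: "real (count A j - Suc 0) = real (count A j) - 1" using cj by (simp add: of_nat_diff)
                have lr: "real (l - Suc 0) = real l - 1" using True by (simp add: of_nat_diff)
                show ?thesis
                proof (cases "j = n")
                  case True
                  then show ?thesis unfolding r_def R_def using \<open>x = j\<close> cr lr
                    by (simp add: filter_remove_notP algebra_simps)
                next
                  case False
                  then show ?thesis unfolding r_def R_def using \<open>x = j\<close> cr lr
                    by (simp add: filter_remove_notP algebra_simps)
                qed
              qed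
              ultimately show ?thesis using Suc[of "A - {#x#}" "l-1"] True unfolding h1_def by simp
            qed
            finally show ?thesis using \<open>x = j\<close> unfolding N_def a_def by simp
          next
            case False
            have "pr (A - {#x#}) (\<lambda>ys. E n j (Suc M) l (x#ys)) = pr (A - {#x#}) (\<lambda>_. False)"
              using False \<open>x = j\<close> by (simp add: E_Cons)
            then show ?thesis using False \<open>x = j\<close> pr_const[of "A - {#x#}" False] unfolding h1_def by simp
          qed
        next
          case False
          have "pr (A - {#x#}) (\<lambda>ys. E n j (Suc M) l (x#ys)) = pr (A - {#x#}) (\<lambda>_. False)"
            using False \<open>\<not> x < j\<close> by (simp add: E_Cons)
          then show ?thesis using False \<open>\<not> x < j\<close> pr_const[of "A - {#x#}" False] by simp
        qed
      qed
    qed simp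
    also have "\<dots> = real b * (h0 * r / real N) + (if j \<in># A then real a / real N * h1 * r else 0)"
      unfolding sum.distrib sum_distrib_right[symmetric] b_def size_filter_sum_real
      by (simp add: sum.delta)
    also have "\<dots> = (real b / real N * h0 + real a / real N * h1) * r"
      unfolding a_def by (auto simp: not_in_iff field_simps)
    also have "\<dots> = hg a b N (Suc M) l * r"
      using hg_rec[OF N1, of a b M l] unfolding h0_def h1_def by simp
    finally show ?thesis unfolding a_def b_def N_def r_def .
  qed
qed

lemma count_rank: "count (rank_mset n k) j = (if j \<in> {1..n} then k else 0)"
  unfolding rank_mset_def count_sum by (simp add: sum.delta)

lemma set_rank: "k \<ge> 1 \<Longrightarrow> set_mset (rank_mset n k) = {1..n}"
  unfolding rank_mset_def by (auto simp: set_mset_sum)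

lemma size_rank: "size (rank_mset n k) = k * n"
  unfolding rank_mset_def by simp

lemma size_filter_rank:
  assumes "k \<ge> 1"
  shows "size (filter_mset P (rank_mset n k)) = k * card {x\<in>{1..n}. P x}"
proof -
  have "size (filter_mset P (rank_mset n k)) = (\<Sum>x\<in>{1..n}. if P x then k else 0)"
    unfolding size_filter_sum set_rank[OF assms] by (rule sum.cong) (auto simp: count_rank)
  also have "\<dots> = (\<Sum>x\<in>{x\<in>{1..n}. P x}. k)" by (rule sum.inter_filter[symmetric]) simp
  finally show ?thesis by simp
qed

lemma card_less: "j \<le> n \<Longrightarrow> card {x\<in>{1..n}. x < (j::nat)} = j - 1"
proof -
  assume "j \<le> n"
  then have "{x\<in>{1..n}. x < j} = {1..<j}" by auto
  then show ?thesis by simp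
qed

lemma card_greater: "card {x\<in>{1..n}. (j::nat) < x} = n - j"
proof -
  have "{x\<in>{1..n}. j < x} = {Suc j..n}" by auto
  then show ?thesis by simp
qed

lemma pr_sum:
  assumes "\<And>xs. xs \<in> permutations_of_multiset A \<Longrightarrow>
     (if P xs then 1 else 0) = (\<Sum>j\<in>J. \<Sum>l\<in>L. if Q j l xs then 1 else (0::real))"
    and "finite J" "finite L"
  shows "pr A P = (\<Sum>j\<in>J. \<Sum>l\<in>L. pr A (Q j l))"
proof -
  have cs: "real (card {xs\<in>S. R xs}) = (\<Sum>xs\<in>S. if R xs then 1 else 0)" if "finite S" for S and R :: "nat list \<Rightarrow> bool"
    using that by (simp add: sum.inter_filter[symmetric])
  define S where "S = permutations_of_multiset A"
  have fS: "finite S" unfolding S_def by simp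
  have "pr A P = (\<Sum>xs\<in>S. if P xs then 1 else 0) / real (card S)"
    unfolding pr_def S_def[symmetric] cs[OF fS] ..
  also have "\<dots> = (\<Sum>xs\<in>S. \<Sum>j\<in>J. \<Sum>l\<in>L. if Q j l xs then 1 else (0::real)) / real (card S)"
    using assms(1) unfolding S_def by (simp cong: sum.cong)
  also have "\<dots> = (\<Sum>j\<in>J. \<Sum>l\<in>L. (\<Sum>xs\<in>S. if Q j l xs then 1 else (0::real)) / real (card S))"
    by (simp add: sum.swap[of _ S] sum_divide_distrib)
  also have "\<dots> = (\<Sum>j\<in>J. \<Sum>l\<in>L. pr A (Q j l))"
    unfolding pr_def S_def[symmetric] cs[OF fS] ..
  finally show ?thesis .
qed

lemma succ_decomp:
  assumes xs: "xs \<in> permutations_of_multiset (rank_mset n k)" and k: "k \<ge> 1" and M: "1 \<le> M"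
    and Mle: "M \<le> k * n"
  shows "(if strategy_succeeds n M xs then 1 else 0) =
     (\<Sum>j\<in>{1..n}. \<Sum>l\<in>{1..k}. if E n j M l xs then 1 else (0::real))"
proof -
  have mx: "mset xs = rank_mset n k" using xs by (rule permutations_of_multisetD)
  have len: "length xs = k * n" using mx size_rank by (metis size_mset)
  define T where "T = take M xs"
  have Tne: "set T \<noteq> {}" unfolding T_def using M Mle len by (cases xs) auto
  define j0 where "j0 = Max (set T)"
  define l0 where "l0 = count (mset T) j0"
  have j0T: "j0 \<in> set T" unfolding j0_def using Tne by simp
  have setxs: "set xs = {1..n}" using mx set_rank[OF k] by (metis set_mset_mset)
  have j0r: "j0 \<in> {1..n}" using j0T setxs unfolding T_def by (auto dest: in_set_takeD)
  have l0r: "l0 \<in> {1..k}"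
  proof -
    have "mset xs = mset T + mset (drop M xs)" unfolding T_def by (metis append_take_drop_id mset_append)
    then have "l0 \<le> count (mset xs) j0" unfolding l0_def by simp
    also have "\<dots> = k" using mx j0r by (simp add: count_rank)
    finally show ?thesis using j0T unfolding l0_def by simp
  qed
  have Eiff: "E n j M l xs \<longleftrightarrow> j = j0 \<and> l = l0 \<and> strategy_succeeds n M xs" if "l \<ge> 1" for j l
  proof
    assume e: "E n j M l xs"
    then have c: "count (mset T) j = l" and le: "\<forall>x\<in>set T. x \<le> j"
      and f: "find (\<lambda>x. j \<le> x) (drop M xs) = Some n" unfolding E_def T_def by auto
    have "j \<in> set T" using c that by (metis count_eq_zero_iff not_one_le_zero set_mset_mset)
    then have "j = j0" unfolding j0_def using le by (intro Max_eqI[symmetric]) auto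
    then show "j = j0 \<and> l = l0 \<and> strategy_succeeds n M xs"
      using c f unfolding l0_def strategy_succeeds_def j0_def T_def by simp
  next
    assume "j = j0 \<and> l = l0 \<and> strategy_succeeds n M xs"
    then show "E n j M l xs" unfolding E_def strategy_succeeds_def l0_def j0_def T_def
      by (auto split: option.splits)
  qed
  have "(\<Sum>j\<in>{1..n}. \<Sum>l\<in>{1..k}. if E n j M l xs then 1 else (0::real)) =
        (\<Sum>j\<in>{1..n}. \<Sum>l\<in>{1..k}. if l = l0 then (if j = j0 then (if strategy_succeeds n M xs then 1 else 0) else 0) else (0::real))"
    by (intro sum.cong refl) (auto simp: Eiff)
  also have "\<dots> = (if strategy_succeeds n M xs then 1 else 0)"
    using j0r l0r by (simp add: sum.delta)
  finally show ?thesis ..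
qed

theorem proposition1:
  fixes n k M :: nat
  assumes "k \<ge> 2" and "n \<ge> 1" and "1 \<le> M" and "M \<le> k * n - 1"
  shows "success_prob n k M =
    (\<Sum>l=1..k-1. real ((M choose l) * ffall k l * ffall (k*(n-1)) (M-l)) / real (ffall (k*n) M))
    + real k * (\<Sum>j=1..n-1. \<Sum>l=1..k.
        real ((M choose l) * ffall k l * ffall (k*(j-1)) (M-l)) / real (ffall (k*n) M)
        * (1 / (real (k*(n-j+1)) - real l)))"
proof -
  define A where "A = rank_mset n k"
  have k1: "k \<ge> 1" using assms(1) by simp
  have Mle: "M \<le> k * n" using assms(4) by simp
  define T where "T j l = hg k (k*(j-1)) (k*n) M l *
      ((if j = n then real k - real l else real k) / (real k + real (k*(n-j)) - real l))" for j l
  have hgeq: "real ((M choose l) * ffall k l * ffall b (M-l)) / real (ffall (k*n) M) = hg k b (k*n) M l" for b l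
    unfolding hg_def by simp
  have "success_prob n k M = pr A (strategy_succeeds n M)"
    unfolding success_prob_def arrangements_def pr_def A_def ..
  also have "\<dots> = (\<Sum>j\<in>{1..n}. \<Sum>l\<in>{1..k}. pr A (E n j M l))"
    by (rule pr_sum) (use succ_decomp[OF _ k1 assms(3) Mle] in \<open>simp_all add: A_def\<close>)
  also have "\<dots> = (\<Sum>j\<in>{1..n}. \<Sum>l\<in>{1..k}. T j l)"
  proof (intro sum.cong refl)
    fix j l assume j: "j \<in> {1..n}"
    have cl: "card {x\<in>{1..n}. x < j} = j - 1" using j card_less[of j n] by simp
    have "pr A (E n j M l) = hg (count A j) (size (filter_mset (\<lambda>x. x < j) A)) (size A) M l * R n j A l"
      by (rule main_pr) (use j in simp)
    also have "\<dots> = T j l"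
      unfolding T_def R_def A_def size_filter_rank[OF k1] cl card_greater size_rank count_rank
      using j assms(2) by auto
    finally show "pr A (E n j M l) = T j l" .
  qed
  also have "\<dots> = (\<Sum>j\<in>{1..n-1}. \<Sum>l\<in>{1..k}. T j l) + (\<Sum>l\<in>{1..k}. T n l)"
  proof -
    obtain m where m: "n = Suc m" using assms(2) by (cases n) auto
    show ?thesis unfolding m by simp
  qed
  also have "(\<Sum>l\<in>{1..k}. T n l) = (\<Sum>l=1..k-1. real ((M choose l) * ffall k l * ffall (k*(n-1)) (M-l)) / real (ffall (k*n) M))"
  proof -
    obtain k' where k': "k = Suc k'" using k1 by (cases k) auto
    have "(\<Sum>l\<in>{1..k}. T n l) = (\<Sum>l\<in>{1..k-1}. T n l) + T n k"
      unfolding k' by simp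
    also have "T n k = 0" unfolding T_def by simp
    also have "(\<Sum>l\<in>{1..k-1}. T n l) = (\<Sum>l=1..k-1. real ((M choose l) * ffall k l * ffall (k*(n-1)) (M-l)) / real (ffall (k*n) M))"
    proof (intro sum.cong refl)
      fix l assume l: "l \<in> {1..k-1}"
      then have "real k - real l \<noteq> 0" by auto
      then show "T n l = real ((M choose l) * ffall k l * ffall (k*(n-1)) (M-l)) / real (ffall (k*n) M)"
        unfolding T_def hgeq by simp
    qed
    finally show ?thesis by simp
  qed
  also have "(\<Sum>j\<in>{1..n-1}. \<Sum>l\<in>{1..k}. T j l) = real k * (\<Sum>j=1..n-1. \<Sum>l=1..k.
        real ((M choose l) * ffall k l * ffall (k*(j-1)) (M-l)) / real (ffall (k*n) M)
        * (1 / (real (k*(n-j+1)) - real l)))"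
    unfolding sum_distrib_left
  proof (intro sum.cong refl)
    fix j l assume j: "j \<in> {1..n-1}"
    have e: "real (k*(n-j+1)) = real k + real (k*(n-j))" by (simp add: algebra_simps)
    show "T j l = real k * (real ((M choose l) * ffall k l * ffall (k*(j-1)) (M-l)) / real (ffall (k*n) M)
        * (1 / (real (k*(n-j+1)) - real l)))"
    proof -
      have "j \<noteq> n" using j assms(2) by auto
      then show ?thesis unfolding T_def hgeq e by simp
    qed
  qed
  finally show ?thesis by simp
qed

end
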